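(* For every $n\ge1$, the number of SR states on $K_n^0$ equals the number of integer lattice points in the parking function polytope $\mathrm{conv}(\mathrm{PF}_n)\subset\mathbb{R}^n$.
   Context: $K_n^0$ is the complete graph on vertex set $\{0,1,\dots,n\}$ with sink $0$; every vertex has degree $n$. A configuration is $c\in\mathbb{Z}_{\ge0}^n$, stable if $c_i\le n-1$ for all $i$. SSM (parameter $p\in(0,1)$): an unstable vertex $i$, independently for each incident edge, sends one grain along it with probability $p$ (grains to the sink disappear), otherwise keeps it. The SSM Markov chain on stable configurations adds a grain at vertex $i$ with probability $\mu_i>0$ and then stabilises; SR = recurrent state of this chain. An $n$-parking function is $q=(q_1,\dots,q_n)\in\mathbb{N}^n$ (positive integers) whose non-decreasing rearrangement $\bar q$ satisfies $\bar q_i\le i$ for all $i$; $\mathrm{PF}_n$ is the set of these, and $\mathrm{conv}$ denotes convex hull. *)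

theory Defs
  imports "HOL-Analysis.Analysis" "HOL-Library.Multiset"
begin

(* Graph K_n^0: non-sink vertices are the elements of the finite type 'n, n = CARD('n);
   the sink is an extra vertex not in 'n. Every non-sink vertex has degree n:
   n-1 edges to the other non-sink vertices and one edge to the sink. *)

definition ssm_stable :: "('n::finite \<Rightarrow> nat) \<Rightarrow> bool" where
  "ssm_stable c \<longleftrightarrow> (\<forall>i. c i \<le> CARD('n) - 1)"

(* One SSM toppling with positive probability: an unstable vertex v sends one grain along
   each edge of some subset of its incident edges: S = chosen edges to non-sink neighbours,
   b = whether the edge to the sink is chosen (that grain disappears). *)
definition ssm_topple :: "('n::finite \<Rightarrow> nat) \<Rightarrow> ('n \<Rightarrow> nat) \<Rightarrow> bool" where
  "ssm_topple c c' \<longleftrightarrow>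
     (\<exists>v. CARD('n) \<le> c v \<and>
       (\<exists>S b. S \<subseteq> UNIV - {v} \<and>
          c' = (\<lambda>j. if j = v then c v - (card S + (if b then 1 else 0))
                     else if j \<in> S then c j + 1 else c j)))"

definition ssm_stabilises_to :: "('n::finite \<Rightarrow> nat) \<Rightarrow> ('n \<Rightarrow> nat) \<Rightarrow> bool" where
  "ssm_stabilises_to c d \<longleftrightarrow> ssm_topple\<^sup>*\<^sup>* c d \<and> ssm_stable d"

(* positive-probability transition of the SSM Markov chain (all mu_i > 0) *)
definition ssm_chain_step :: "('n::finite \<Rightarrow> nat) \<Rightarrow> ('n \<Rightarrow> nat) \<Rightarrow> bool" where
  "ssm_chain_step c d \<longleftrightarrow> ssm_stable c \<and> (\<exists>i. ssm_stabilises_to (c(i := c i + 1)) d)"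

(* SR: recurrent state of the (finite) SSM Markov chain on stable configurations *)
definition SSM_recurrent :: "('n::finite \<Rightarrow> nat) \<Rightarrow> bool" where
  "SSM_recurrent c \<longleftrightarrow> ssm_stable c \<and>
     (\<forall>d. ssm_chain_step\<^sup>*\<^sup>* c d \<longrightarrow> ssm_chain_step\<^sup>*\<^sup>* d c)"

definition parking_function :: "('n::finite \<Rightarrow> nat) \<Rightarrow> bool" where
  "parking_function q \<longleftrightarrow> (\<forall>i. 1 \<le> q i) \<and>
     (let qs = sorted_list_of_multiset (image_mset q (mset_set UNIV))
      in \<forall>i < CARD('n). qs ! i \<le> i + 1)"

definition PF_points :: "(real ^ 'n::finite) set" where
  "PF_points = {(\<chi> i. real (q i)) | q. parking_function q}"

end

theory Submission
  imports Defs
begin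

definition Rc :: "('n::finite \<Rightarrow> nat) \<Rightarrow> bool" where
  "Rc c \<longleftrightarrow> (\<forall>A. card A * (card A - 1) \<le> 2 * (\<Sum>i\<in>A. c i))"

lemma Rc_mono:
  assumes "Rc c" "\<And>i. c i \<le> d i" shows "Rc d"
  unfolding Rc_def
proof
  fix A :: "'a set"
  have "(\<Sum>i\<in>A. c i) \<le> (\<Sum>i\<in>A. d i)" by (rule sum_mono) (use assms(2) in auto)
  with assms(1) show "card A * (card A - 1) \<le> 2 * (\<Sum>i\<in>A. d i)" unfolding Rc_def
    by (meson dual_order.trans mult_le_mono2)
qed

lemma topple_Rc:
  fixes c :: "'n::finite \<Rightarrow> nat"
  assumes "ssm_topple c c'" "Rc c" shows "Rc c'"
proof -
  obtain v S b where v: "CARD('n) \<le> c v" and S: "S \<subseteq> UNIV - {v}"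
    and c': "c' = (\<lambda>j. if j = v then c v - (card S + (if b then 1 else 0))
                     else if j \<in> S then c j + 1 else c j)"
    using assms(1) unfolding ssm_topple_def by blast
  have cardS: "card S \<le> CARD('n) - 1"
    using card_mono[OF _ S] by (simp add: card_Diff_subset)
  show ?thesis unfolding Rc_def
  proof
    fix A :: "'n set"
    show "card A * (card A - 1) \<le> 2 * (\<Sum>i\<in>A. c' i)"
    proof (cases "v \<in> A")
      case False
      have "(\<Sum>i\<in>A. c i) \<le> (\<Sum>i\<in>A. c' i)"
        by (rule sum_mono) (use False in \<open>auto simp: c'\<close>)
      with assms(2) show ?thesis unfolding Rc_def
        by (meson dual_order.trans mult_le_mono2)
    next
      case True
      define k where "k = card A"
      have "A \<noteq> {}" using True by auto
      hence k1: "k \<ge> 1" unfolding k_def by (simp add: Suc_leI card_gt_0_iff)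
      have sA: "(\<Sum>i\<in>A. c' i) = c' v + (\<Sum>i\<in>A - {v}. c' i)"
        using True by (simp add: sum.remove)
      have s2: "(\<Sum>i\<in>A - {v}. c' i) = (\<Sum>i\<in>A - {v}. c i) + card ((A - {v}) \<inter> S)"
      proof -
        have "(\<Sum>i\<in>A - {v}. c' i) = (\<Sum>i\<in>A - {v}. c i + (if i \<in> S then 1 else 0))"
          by (rule sum.cong) (auto simp: c')
        also have "\<dots> = (\<Sum>i\<in>A - {v}. c i) + (\<Sum>i\<in>A - {v}. (if i \<in> S then 1 else 0))"
          by (simp add: sum.distrib)
        also have "(\<Sum>i\<in>A - {v}. (if i \<in> S then 1 else 0::nat)) = card ((A - {v}) \<inter> S)"
          by (simp add: sum.If_cases)
        finally show ?thesis .
      qed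
      have SA: "card S \<le> card ((A - {v}) \<inter> S) + (CARD('n) - k)"
      proof -
        have "S \<subseteq> ((A - {v}) \<inter> S) \<union> (UNIV - A)" using S by auto
        hence "card S \<le> card ((A - {v}) \<inter> S) + card (UNIV - A)"
          by (meson card_Un_le card_mono finite dual_order.trans)
        moreover have "card (UNIV - A) = CARD('n) - k" by (simp add: card_Diff_subset k_def)
        ultimately show ?thesis by simp
      qed
      have cv: "c' v + card ((A - {v}) \<inter> S) \<ge> k - 1"
      proof -
        have kn: "k \<le> CARD('n)" unfolding k_def by (simp add: card_mono)
        show ?thesis using v SA cardS k1 kn by (cases b; simp add: c'; arith)
      qed
      have IH: "(k-1) * (k - 2) \<le> 2 * (\<Sum>i\<in>A - {v}. c i)"
        using assms(2) True unfolding Rc_def k_def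
        by (metis card_Diff_singleton diff_diff_left finite one_add_one)
      have "k * (k - 1) = (k-1)*(k-2) + 2 * (k - 1)"
        using k1 by (cases k; cases "k - 1") auto
      also have "\<dots> \<le> 2 * (\<Sum>i\<in>A - {v}. c i) + 2 * (c' v + card ((A - {v}) \<inter> S))"
        using add_le_mono[OF IH mult_le_mono2[OF cv, of 2]] by simp
      also have "\<dots> = 2 * (\<Sum>i\<in>A. c' i)" using sA s2 by simp
      finally show ?thesis by (simp add: k_def)
    qed
  qed
qed

lemma topple_star_Rc: "ssm_topple\<^sup>*\<^sup>* c c' \<Longrightarrow> Rc c \<Longrightarrow> Rc c'"
  by (induction rule: rtranclp_induct) (auto intro: topple_Rc)

lemma chain_Rc: "ssm_chain_step c d \<Longrightarrow> Rc c \<Longrightarrow> Rc d"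
proof -
  assume a: "ssm_chain_step c d" "Rc c"
  then obtain i where i: "ssm_topple\<^sup>*\<^sup>* (c(i := c i + 1)) d"
    unfolding ssm_chain_step_def ssm_stabilises_to_def by blast
  have "Rc (c(i := c i + 1))" by (rule Rc_mono[OF a(2)]) auto
  thus ?thesis using i topple_star_Rc by blast
qed

lemma chain_star_Rc: "ssm_chain_step\<^sup>*\<^sup>* c d \<Longrightarrow> Rc c \<Longrightarrow> Rc d"
  by (induction rule: rtranclp_induct) (auto intro: chain_Rc)

lemma chain_star_stable: "ssm_chain_step\<^sup>*\<^sup>* c d \<Longrightarrow> ssm_stable c \<Longrightarrow> ssm_stable d"
  by (induction rule: rtranclp_induct) (auto simp: ssm_chain_step_def ssm_stabilises_to_def)


lemma card_pos: "CARD('n::finite) \<ge> 1"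
  by (simp add: Suc_leI finite_UNIV_card_ge_0)

lemma inc_step:
  fixes c :: "'n::finite \<Rightarrow> nat"
  assumes "ssm_stable c" "c j < CARD('n) - 1"
  shows "ssm_chain_step c (c(j := c j + 1))"
  using assms unfolding ssm_chain_step_def ssm_stabilises_to_def ssm_stable_def by auto

definition Mx :: "'n::finite \<Rightarrow> nat" where "Mx = (\<lambda>_. CARD('n) - 1)"

lemma reach_M:
  fixes c :: "'n::finite \<Rightarrow> nat"
  shows "ssm_stable c \<Longrightarrow> ssm_chain_step\<^sup>*\<^sup>* c Mx"
proof (induction "\<Sum>i\<in>UNIV. CARD('n) - 1 - c i" arbitrary: c rule: less_induct)
  case less
  show ?case
  proof (cases "c = Mx")
    case True then show ?thesis by simp
  next
    case False
    then obtain j where "c j \<noteq> CARD('n) - 1" unfolding Mx_def by auto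
    with less.prems have j: "c j < CARD('n) - 1" unfolding ssm_stable_def
      by (meson le_neq_implies_less)
    let ?c = "c(j := c j + 1)"
    have st: "ssm_stable ?c" using less.prems j unfolding ssm_stable_def by auto
    have "(\<Sum>i\<in>UNIV. CARD('n) - 1 - ?c i) < (\<Sum>i\<in>UNIV. CARD('n) - 1 - c i)"
      by (rule sum_strict_mono_ex1) (use j in auto)
    hence "ssm_chain_step\<^sup>*\<^sup>* ?c Mx" using less.hyps st by blast
    moreover have "ssm_chain_step c ?c" using inc_step[OF less.prems j] .
    ultimately show ?thesis by (meson converse_rtranclp_into_rtranclp)
  qed
qed

lemma Rc_Mx: "Rc (Mx :: 'n::finite \<Rightarrow> nat)"
  unfolding Rc_def Mx_def
proof
  fix A :: "'n set"
  have "card A \<le> CARD('n)" by (simp add: card_mono)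
  hence "card A - 1 \<le> 2 * (CARD('n) - 1)" by linarith
  hence "card A * (card A - 1) \<le> card A * (2 * (CARD('n) - 1))" by (rule mult_le_mono2)
  thus "card A * (card A - 1) \<le> 2 * (\<Sum>i\<in>A. CARD('n) - 1)" by simp
qed

lemma Mx_stable: "ssm_stable (Mx :: 'n::finite \<Rightarrow> nat)"
  unfolding ssm_stable_def Mx_def by simp

lemma topple_sink:
  fixes c :: "'n::finite \<Rightarrow> nat"
  assumes "CARD('n) \<le> c v" shows "ssm_topple c (c(v := c v - 1))"
proof -
  have "c(v := c v - 1) = (\<lambda>j. if j = v then c v - (card ({}::'n set) + (if True then 1 else 0))
                     else if j \<in> {} then c j + 1 else c j)" by (auto simp: fun_eq_iff)
  thus ?thesis unfolding ssm_topple_def using assms by blast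
qed

lemma topple_set:
  fixes c :: "'n::finite \<Rightarrow> nat"
  shows "finite W \<Longrightarrow> \<forall>z\<in>W. CARD('n) \<le> c z \<Longrightarrow>
     ssm_topple\<^sup>*\<^sup>* c (\<lambda>j. if j \<in> W then c j - 1 else c j)"
proof (induction W arbitrary: c rule: finite_induct)
  case empty then show ?case by simp
next
  case (insert w F)
  define c1 where "c1 = c(w := c w - 1)"
  have t: "ssm_topple c c1" unfolding c1_def using insert.prems by (intro topple_sink) auto
  have "\<forall>z\<in>F. CARD('n) \<le> c1 z" using insert.prems insert.hyps unfolding c1_def by auto
  hence r: "ssm_topple\<^sup>*\<^sup>* c1 (\<lambda>j. if j \<in> F then c1 j - 1 else c1 j)"
    by (rule insert.IH)
  have e: "(\<lambda>j. if j \<in> F then c1 j - 1 else c1 j) = (\<lambda>j. if j \<in> insert w F then c j - 1 else c j)"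
    using insert.hyps unfolding c1_def by (auto simp: fun_eq_iff)
  show ?case using converse_rtranclp_into_rtranclp[OF t r] unfolding e .
qed

lemma topple_main:
  fixes c :: "'n::finite \<Rightarrow> nat"
  assumes "CARD('n) \<le> c v" "T \<subseteq> UNIV - {v}"
  shows "ssm_topple c (\<lambda>j. if j = v then c v - (card T + 1) else if j \<in> T then c j + 1 else c j)"
proof -
  have "(\<lambda>j. if j = v then c v - (card T + 1) else if j \<in> T then c j + 1 else c j)
     = (\<lambda>j. if j = v then c v - (card T + (if True then 1 else 0)) else if j \<in> T then c j + 1 else c j)"
    by simp
  thus ?thesis unfolding ssm_topple_def using assms by blast
qed

lemma dmove:
  fixes d :: "'n::finite \<Rightarrow> nat"
  assumes st: "ssm_stable d" and du: "d u = CARD('n) - 1" and T: "T \<subseteq> UNIV - {u}"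
    and W: "W \<subseteq> T" and Wm: "\<forall>j\<in>W. d j = CARD('n) - 1" and Tm: "\<forall>j\<in>T - W. d j < CARD('n) - 1"
  shows "ssm_chain_step d (\<lambda>j. if j = u then CARD('n) - 1 - card T else if j \<in> T - W then d j + 1 else d j)"
proof -
  define n where "n = CARD('n)"
  have n1: "n \<ge> 1" unfolding n_def by (rule card_pos)
  define c0 where "c0 = d(u := d u + 1)"
  have c0u: "c0 u = n" using du n1 unfolding c0_def n_def by simp
  define c1 where "c1 = (\<lambda>j. if j = u then c0 u - (card T + 1) else if j \<in> T then c0 j + 1 else c0 j)"
  have t1: "ssm_topple c0 c1" unfolding c1_def by (rule topple_main) (use c0u T n_def in auto)
  have fW: "finite W" by simp
  have Wge: "\<forall>z\<in>W. CARD('n) \<le> c1 z"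
  proof
    fix z assume z: "z \<in> W"
    hence "z \<noteq> u" "z \<in> T" using W T by auto
    thus "CARD('n) \<le> c1 z" using Wm z n1 unfolding c1_def c0_def n_def by auto
  qed
  have t2: "ssm_topple\<^sup>*\<^sup>* c1 (\<lambda>j. if j \<in> W then c1 j - 1 else c1 j)"
    by (rule topple_set[OF fW Wge])
  define e where "e = (\<lambda>j. if j = u then n - 1 - card T else if j \<in> T - W then d j + 1 else d j)"
  have eq: "(\<lambda>j. if j \<in> W then c1 j - 1 else c1 j) = e"
  proof
    fix j
    show "(if j \<in> W then c1 j - 1 else c1 j) = e j"
    proof (cases "j = u")
      case True
      then have "j \<notin> W" using W T by auto
      thus ?thesis using True c0u unfolding c1_def e_def by simp
    next
      case False
      thus ?thesis using W unfolding c1_def e_def c0_def by auto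
    qed
  qed
  have fin: "ssm_topple\<^sup>*\<^sup>* c0 e"
    using converse_rtranclp_into_rtranclp[OF t1 t2] unfolding eq .
  have stab: "ssm_stable e"
    using st Tm unfolding ssm_stable_def e_def n_def by (auto simp: Suc_le_eq)
  show ?thesis unfolding ssm_chain_step_def ssm_stabilises_to_def
    using st fin stab unfolding c0_def e_def n_def by blast
qed

lemma int_mul_le1:
  fixes a D :: int
  assumes "2 \<le> a" "a * D \<le> 1" shows "D \<le> 0"
proof (rule ccontr)
  assume "\<not> D \<le> 0"
  hence "1 \<le> D" by simp
  hence "a * 1 \<le> a * D" using mult_left_mono[of 1 D a] assms(1) by simp
  thus False using assms by linarith
qed

lemma int_mul_ge1:
  fixes a D :: int
  assumes "2 \<le> a" "1 \<le> a * D" shows "1 \<le> D"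
proof (rule ccontr)
  assume "\<not> 1 \<le> D"
  hence "D \<le> 0" by simp
  hence "a * D \<le> a * 0" using mult_left_mono[of D 0 a] assms(1) by simp
  thus False using assms by simp
qed

lemma extremal_violator:
  fixes c :: "'n::finite \<Rightarrow> nat"
  assumes "\<not> Rc c"
  obtains A where "2 * (\<Sum>i\<in>A. c i) < card A * (card A - 1)"
    and "\<forall>x\<in>A. c x + 1 \<le> card A" and "\<forall>j. j \<notin> A \<longrightarrow> card A + 1 \<le> c j"
proof -
  define n where "n = CARD('n)"
  have n1: "n \<ge> 1" unfolding n_def by (rule card_pos)
  define G where "G = (\<lambda>A::'n set. 2 * (\<Sum>i\<in>A. int (c i)) - int (card A) * (int (card A) - 1))"
  define key where "key = (\<lambda>A. (int n + 1) * G A - int (card A))"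
  have cle: "\<And>B::'n set. card B \<le> n" unfolding n_def by (simp add: card_mono)
  have viol_iff: "G A < 0 \<longleftrightarrow> 2 * (\<Sum>i\<in>A. c i) < card A * (card A - 1)" for A
  proof -
    have "int (card A * (card A - 1)) = int (card A) * (int (card A) - 1)"
      by (cases "card A") (auto simp: algebra_simps)
    moreover have "int (2 * (\<Sum>i\<in>A. c i)) = 2 * (\<Sum>i\<in>A. int (c i))" by simp
    ultimately show ?thesis unfolding G_def by linarith
  qed
  obtain A0 where A0: "G A0 < 0" using assms viol_iff unfolding Rc_def by (meson not_le)
  have fin: "finite (range key)" by simp
  have "Min (range key) \<in> range key" by (rule Min_in[OF fin]) simp
  then obtain A where Am: "key A = Min (range key)" by (metis imageE)
  have Amin: "\<And>B. key A \<le> key B" using Am fin by simp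
  have GA: "G A < 0"
  proof (rule ccontr)
    assume "\<not> G A < 0"
    hence "0 \<le> (int n + 1) * G A" by simp
    hence "key A \<ge> - int n" unfolding key_def using cle[of A] by linarith
    moreover have "(int n + 1) * G A0 \<le> (int n + 1) * (-1)"
      using A0 by (intro mult_left_mono) auto
    hence "key A0 \<le> - int n - 1" unfolding key_def by simp
    ultimately show False using Amin[of A0] by simp
  qed
  have inA: "\<forall>x\<in>A. c x + 1 \<le> card A"
  proof
    fix x assume x: "x \<in> A"
    define k where "k = card A"
    have "A \<noteq> {}" using x by auto
    hence k1: "k \<ge> 1" unfolding k_def by (simp add: Suc_leI card_gt_0_iff)
    have ck: "card (A - {x}) = k - 1" using x k_def by simp
    have s: "(\<Sum>i\<in>A. int (c i)) = int (c x) + (\<Sum>i\<in>A - {x}. int (c i))"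
      using x by (simp add: sum.remove)
    have e1: "G A - G (A - {x}) = 2 * int (c x) - 2 * (int k - 1)"
      unfolding G_def s ck k_def[symmetric] using k1 by (simp add: of_nat_diff algebra_simps)
    have "key A \<le> key (A - {x})" by (rule Amin)
    hence e2: "(int n + 1) * G A - int k \<le> (int n + 1) * G (A - {x}) - (int k - 1)"
      unfolding key_def ck k_def[symmetric] using k1 by (simp add: of_nat_diff)
    have e3: "(int n + 1) * (G A - G (A - {x})) = (int n + 1) * G A - (int n + 1) * G (A - {x})"
      by (simp add: right_diff_distrib)
    have "(int n + 1) * (2 * int (c x) - 2 * (int k - 1)) \<le> 1"
      using e1 e2 e3 by simp
    hence "2 * int (c x) - 2 * (int k - 1) \<le> 0" by (rule int_mul_le1[rotated]) (use n1 in simp)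
    hence "int (c x + 1) \<le> int k" by simp
    thus "c x + 1 \<le> card A" unfolding k_def[symmetric] by (simp only: of_nat_le_iff)
  qed
  have outA: "\<forall>j. j \<notin> A \<longrightarrow> card A + 1 \<le> c j"
  proof (intro allI impI)
    fix j assume j: "j \<notin> A"
    define k where "k = card A"
    have ck: "card (insert j A) = k + 1" using j k_def by simp
    have s: "(\<Sum>i\<in>insert j A. int (c i)) = int (c j) + (\<Sum>i\<in>A. int (c i))"
      using j by simp
    have e1: "G (insert j A) - G A = 2 * int (c j) - 2 * int k"
      unfolding G_def s ck k_def[symmetric] by (simp add: algebra_simps)
    have "key A \<le> key (insert j A)" by (rule Amin)
    hence e2: "(int n + 1) * G A - int k \<le> (int n + 1) * G (insert j A) - (int k + 1)"
      unfolding key_def ck k_def[symmetric] by simp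
    have e3: "(int n + 1) * (G (insert j A) - G A) = (int n + 1) * G (insert j A) - (int n + 1) * G A"
      by (simp add: right_diff_distrib)
    have "1 \<le> (int n + 1) * (G (insert j A) - G A)"
      using e2 e3 by linarith
    hence "1 \<le> (int n + 1) * (2 * int (c j) - 2 * int k)" unfolding e1 .
    hence "1 \<le> 2 * int (c j) - 2 * int k" by (rule int_mul_ge1[rotated]) (use n1 in simp)
    hence "int (k + 1) \<le> int (c j)" by simp
    thus "card A + 1 \<le> c j" unfolding k_def[symmetric] by (simp only: of_nat_le_iff)
  qed
  show ?thesis using that GA viol_iff inA outA by blast
qed

lemma top_subset:
  fixes f :: "'a \<Rightarrow> nat"
  shows "finite X \<Longrightarrow> r \<le> card X \<Longrightarrow> \<exists>Y\<subseteq>X. card Y = r \<and> (\<forall>y\<in>Y. \<forall>x\<in>X - Y. f x \<le> f y)"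
proof (induction r)
  case 0 then show ?case by (intro exI[of _ "{}"]) auto
next
  case (Suc r)
  then obtain Y where Y: "Y \<subseteq> X" "card Y = r" "\<forall>y\<in>Y. \<forall>x\<in>X - Y. f x \<le> f y" by auto
  have finY: "finite Y" using Y(1) Suc.prems(1) finite_subset by blast
  have ne: "X - Y \<noteq> {}"
  proof
    assume "X - Y = {}"
    hence "X \<subseteq> Y" by auto
    hence "card X \<le> card Y" using finY card_mono by blast
    thus False using Y(2) Suc.prems(2) by simp
  qed
  have fin: "finite (f ` (X - Y))" using Suc.prems by simp
  have "Max (f ` (X - Y)) \<in> f ` (X - Y)" by (rule Max_in[OF fin]) (use ne in simp)
  then obtain y0 where y0: "y0 \<in> X - Y" "f y0 = Max (f ` (X - Y))" by (metis imageE)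
  have y0max: "\<forall>x\<in>X - Y. f x \<le> f y0" using y0(2) fin by simp
  show ?case
  proof (intro exI[of _ "insert y0 Y"] conjI)
    show "insert y0 Y \<subseteq> X" using y0 Y by auto
    show "card (insert y0 Y) = Suc r" using y0 Y finY by simp
    show "\<forall>y\<in>insert y0 Y. \<forall>x\<in>X - insert y0 Y. f x \<le> f y" using y0max Y(3) by auto
  qed
qed

definition Phi :: "('n::finite \<Rightarrow> nat) \<Rightarrow> nat" where
  "Phi c = (\<Sum>i\<in>UNIV. (CARD('n) - 1 - c i) + (if c i < CARD('n) - 1 then 1 else 0))"

lemma pred_step:
  fixes d :: "'n::finite \<Rightarrow> nat"
  assumes st: "ssm_stable d" and R: "Rc d" and ne: "d \<noteq> Mx"
  shows "\<exists>d'. ssm_stable d' \<and> Rc d' \<and> Phi d' < Phi d \<and> ssm_chain_step d' d"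
proof -
  define n where "n = CARD('n)"
  have n1: "n \<ge> 1" unfolding n_def by (rule card_pos)
  have dle: "\<And>j. d j \<le> n - 1" using st unfolding ssm_stable_def n_def by auto
  obtain u where umin: "\<And>j. d u \<le> d j" using ex_has_least_nat[of "\<lambda>_. True" undefined d] by blast
  obtain j0 where "d j0 \<noteq> n - 1" using ne unfolding Mx_def n_def by auto
  hence du: "d u < n - 1" using dle[of j0] umin[of j0] by linarith
  define h where "h = n - 1 - d u"
  have h1: "h \<ge> 1" "h \<le> n - 1" "d u = n - 1 - h" using du unfolding h_def by auto
  define Z where "Z = {j. j \<noteq> u \<and> d j = n - 1}"
  define Nx where "Nx = {j. j \<noteq> u \<and> d j < n - 1}"
  have ZN: "Z \<inter> Nx = {}" "Z \<union> Nx = UNIV - {u}"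
    unfolding Z_def Nx_def using dle by (auto simp: le_less)
  have cZN: "card Z + card Nx = n - 1"
  proof -
    have "card Z + card Nx = card (Z \<union> Nx)" using ZN(1) by (simp add: card_Un_disjoint)
    also have "\<dots> = n - 1" unfolding ZN(2) n_def by (simp add: card_Diff_subset)
    finally show ?thesis .
  qed
  obtain W T' where W: "W \<subseteq> Z" and T': "T' \<subseteq> Nx" and cWT: "card W + card T' = h"
    and WZ: "T' \<noteq> {} \<longrightarrow> W = Z" and top: "\<forall>y\<in>T'. \<forall>x\<in>Nx - T'. d x \<le> d y"
  proof (cases "h \<le> card Z")
    case True
    then obtain W where "W \<subseteq> Z" "card W = h" using obtain_subset_with_card_n by metis
    thus ?thesis using that[of W "{}"] by auto
  next
    case False
    have "h - card Z \<le> card Nx" using cZN h1 by linarith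
    then obtain T' where "T' \<subseteq> Nx" "card T' = h - card Z" "\<forall>y\<in>T'. \<forall>x\<in>Nx - T'. d x \<le> d y"
      using top_subset[of Nx "h - card Z" d] by auto
    thus ?thesis using that[of Z T'] False by auto
  qed
  have uT: "u \<notin> T'" "u \<notin> W" using T' W unfolding Nx_def Z_def by auto
  have T'lt: "\<And>j. j \<in> T' \<Longrightarrow> d j < n - 1" using T' unfolding Nx_def by auto
  have T'pos: "\<And>j. j \<in> T' \<Longrightarrow> d j \<ge> 1"
  proof (rule ccontr)
    fix j assume j: "j \<in> T'" "\<not> d j \<ge> 1"
    hence dj: "d j = 0" by simp
    hence d0: "d u = 0" using umin[of j] by simp
    have ju: "j \<noteq> u" using j uT by auto
    have "card {u, j} * (card {u, j} - 1) \<le> 2 * (\<Sum>i\<in>{u, j}. d i)" using R unfolding Rc_def by blast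
    thus False using ju dj d0 by simp
  qed
  have WT'disj: "W \<inter> T' = {}" using W T' ZN(1) by auto
  have cardT: "card (W \<union> T') = h" using WT'disj cWT by (simp add: card_Un_disjoint)
  define d' where "d' = (\<lambda>j. if j = u then n - 1 else if j \<in> T' then d j - 1 else d j)"
  have st': "ssm_stable d'" unfolding ssm_stable_def
  proof
    fix i show "d' i \<le> CARD('n) - 1" using dle[of i] unfolding d'_def n_def[symmetric] by auto
  qed
  have step: "ssm_chain_step d' d"
  proof -
    have "ssm_chain_step d' (\<lambda>j. if j = u then CARD('n) - 1 - card (W \<union> T')
             else if j \<in> (W \<union> T') - W then d' j + 1 else d' j)"
    proof (rule dmove[OF st'])
      show "d' u = CARD('n) - 1" unfolding d'_def n_def by simp
      show "W \<union> T' \<subseteq> UNIV - {u}" using uT by auto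
      show "W \<subseteq> W \<union> T'" by auto
      show "\<forall>j\<in>W. d' j = CARD('n) - 1"
        using W WT'disj uT unfolding d'_def Z_def n_def by auto
      show "\<forall>j\<in>W \<union> T' - W. d' j < CARD('n) - 1"
        using T'lt T'pos uT unfolding d'_def n_def[symmetric] by fastforce
    qed
    moreover have "(\<lambda>j. if j = u then CARD('n) - 1 - card (W \<union> T')
             else if j \<in> (W \<union> T') - W then d' j + 1 else d' j) = d"
    proof
      fix j
      show "(if j = u then CARD('n) - 1 - card (W \<union> T')
             else if j \<in> (W \<union> T') - W then d' j + 1 else d' j) = d j"
        using cardT h1 T'pos[of j] WT'disj unfolding d'_def n_def[symmetric] by auto
    qed
    ultimately show ?thesis by simp
  qed
  define phi where "phi = (\<lambda>(c::'n \<Rightarrow> nat) i. (n - 1 - c i) + (if c i < n - 1 then 1 else 0::nat))"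
  have Phi_eq: "\<And>c. Phi c = (\<Sum>i\<in>UNIV. phi c i)" unfolding Phi_def phi_def n_def by simp
  have pw: "\<And>i. phi d' i + (if i = u then h + 1 else 0) = phi d i + (if i \<in> T' then 1 else 0)"
  proof -
    fix i
    show "phi d' i + (if i = u then h + 1 else 0) = phi d i + (if i \<in> T' then 1 else 0)"
    proof (cases "i = u")
      case True thus ?thesis using uT du h1 unfolding phi_def d'_def by auto
    next
      case False
      thus ?thesis using T'lt[of i] T'pos[of i] unfolding phi_def d'_def by auto
    qed
  qed
  have "(\<Sum>i\<in>UNIV. phi d' i + (if i = u then h + 1 else 0)) = (\<Sum>i\<in>UNIV. phi d i + (if i \<in> T' then 1 else 0))"
    using pw by simp
  hence "Phi d' + (h + 1) = Phi d + card T'"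
    unfolding Phi_eq sum.distrib by (simp add: sum.If_cases)
  hence Phi_lt: "Phi d' < Phi d" using cWT by linarith
  have pw2: "\<And>i. d' i + (if i \<in> T' then 1 else 0) = d i + (if i = u then h else 0)"
  proof -
    fix i show "d' i + (if i \<in> T' then 1 else 0) = d i + (if i = u then h else 0)"
      using uT h1 T'pos[of i] unfolding d'_def by auto
  qed
  have Rc': "Rc d'"
  proof (rule ccontr)
    assume nR: "\<not> Rc d'"
    obtain A where viol: "2 * (\<Sum>i\<in>A. d' i) < card A * (card A - 1)"
      and inA: "\<forall>x\<in>A. d' x + 1 \<le> card A" and outA: "\<forall>j. j \<notin> A \<longrightarrow> card A + 1 \<le> d' j"
      using extremal_violator[OF nR] by blast
    define k where "k = card A"
    have sumAeq: "\<And>B. (\<Sum>i\<in>B. d' i) + card (B \<inter> T') = (\<Sum>i\<in>B. d i) + (if u \<in> B then h else 0)"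
    proof -
      fix B :: "'n set"
      have "(\<Sum>i\<in>B. d' i + (if i \<in> T' then 1 else 0)) = (\<Sum>i\<in>B. d i + (if i = u then h else 0))"
        using pw2 by simp
      thus "(\<Sum>i\<in>B. d' i) + card (B \<inter> T') = (\<Sum>i\<in>B. d i) + (if u \<in> B then h else 0)"
        unfolding sum.distrib by (simp add: sum.If_cases Int_commute)
    qed
    have "A \<noteq> UNIV"
    proof
      assume AU: "A = UNIV"
      have "card A * (card A - 1) \<le> 2 * (\<Sum>i\<in>A. d i)" using R unfolding Rc_def by blast
      moreover have "(\<Sum>i\<in>A. d i) \<le> (\<Sum>i\<in>A. d' i)"
        using sumAeq[of A] AU cWT card_mono[OF _ Int_lower2[of A T']] by simp
      ultimately show False using viol by linarith
    qed
    hence "A \<subset> UNIV" by auto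
    hence kn: "k < n" unfolding k_def n_def by (intro psubset_card_mono) auto
    have uA: "u \<notin> A"
    proof
      assume "u \<in> A"
      hence "d' u + 1 \<le> k" using inA k_def by auto
      thus False using kn n1 unfolding d'_def by simp
    qed
    obtain t where t: "t \<in> A" "t \<in> T'"
    proof (rule ccontr)
      assume "\<not> thesis"
      hence "A \<inter> T' = {}" using that by blast
      hence "(\<Sum>i\<in>A. d' i) = (\<Sum>i\<in>A. d i)" using sumAeq[of A] uA by simp
      thus False using viol R unfolding Rc_def by (metis not_le)
    qed
    have WZ': "W = Z" using WZ t by auto
    have "d' t + 1 \<le> k" using inA t unfolding k_def by auto
    moreover have "d' t = d t - 1" using t uT unfolding d'_def by auto
    ultimately have dt: "d t \<le> k" using T'pos[of t] t by linarith
    have k1: "k \<ge> 1" using dt T'pos[of t] t by linarith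
    have ZA: "A \<inter> Z = {}"
    proof (rule ccontr)
      assume "A \<inter> Z \<noteq> {}"
      then obtain j where j: "j \<in> A" "j \<in> Z" by auto
      hence "j \<notin> T'" "j \<noteq> u" using ZN(1) T' Z_def by auto
      hence "d' j = n - 1" using j unfolding d'_def Z_def by auto
      thus False using inA j kn unfolding k_def by fastforce
    qed
    have A_sub: "A \<subseteq> Nx" using ZA uA ZN(2) by auto
    have N_sub: "Nx - T' \<subseteq> A"
    proof
      fix j assume j: "j \<in> Nx - T'"
      show "j \<in> A"
      proof (rule ccontr)
        assume "j \<notin> A"
        hence "k + 1 \<le> d' j" using outA k_def by auto
        moreover have "d' j = d j" using j unfolding d'_def Nx_def by auto
        moreover have "d j \<le> d t" using top t j by auto
        ultimately show False using dt by linarith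
      qed
    qed
    have Adecomp: "A = (Nx - T') \<union> (A \<inter> T')" using A_sub N_sub by auto
    have "k = card (Nx - T') + card (A \<inter> T')"
      unfolding k_def by (subst Adecomp) (rule card_Un_disjoint, auto)
    moreover have "card (Nx - T') = card Nx - card T'" using T' by (simp add: card_Diff_subset)
    moreover have "card T' = h - card Z" using cWT WZ' by simp
    moreover have "card Z + card T' = h" using cWT WZ' by simp
    moreover have "card T' \<le> card Nx" using T' by (simp add: card_mono)
    ultimately have keq: "k = n - 1 - h + card (A \<inter> T')" using cZN h1 by linarith
    have sA: "(\<Sum>i\<in>A. d' i) + card (A \<inter> T') = (\<Sum>i\<in>A. d i)" using sumAeq[of A] uA by simp
    have "card (insert u A) * (card (insert u A) - 1) \<le> 2 * (\<Sum>i\<in>insert u A. d i)"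
      using R unfolding Rc_def by blast
    hence RU: "(k + 1) * k \<le> 2 * ((\<Sum>i\<in>A. d i) + d u)" using uA unfolding k_def by simp
    have kk: "(k + 1) * k = k * (k - 1) + 2 * k" using k1 by (cases k) auto
    obtain P where P: "P = k * (k - 1)" by simp
    have v2: "2 * (\<Sum>i\<in>A. d' i) < P" using viol P unfolding k_def by simp
    have r2: "P + 2 * k \<le> 2 * (\<Sum>i\<in>A. d i) + 2 * d u" using RU kk P by simp
    show False using v2 r2 keq sA h1 by linarith
  qed
  show ?thesis using st' Rc' Phi_lt step by blast
qed

lemma reach_from_M:
  fixes d :: "'n::finite \<Rightarrow> nat"
  shows "ssm_stable d \<Longrightarrow> Rc d \<Longrightarrow> ssm_chain_step\<^sup>*\<^sup>* Mx d"
proof (induction "Phi d" arbitrary: d rule: less_induct)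
  case less
  show ?case
  proof (cases "d = Mx")
    case True thus ?thesis by simp
  next
    case False
    then obtain d' where "ssm_stable d'" "Rc d'" "Phi d' < Phi d" "ssm_chain_step d' d"
      using pred_step less.prems by blast
    thus ?thesis using less.hyps by (meson rtranclp.rtrancl_into_rtrancl)
  qed
qed

lemma SR_iff: "SSM_recurrent (c::'n::finite \<Rightarrow> nat) \<longleftrightarrow> ssm_stable c \<and> Rc c"
proof
  assume a: "SSM_recurrent c"
  hence st: "ssm_stable c" unfolding SSM_recurrent_def by simp
  have "ssm_chain_step\<^sup>*\<^sup>* c Mx" using reach_M[OF st] .
  hence "ssm_chain_step\<^sup>*\<^sup>* Mx c" using a unfolding SSM_recurrent_def by blast
  hence "Rc c" using chain_star_Rc Rc_Mx by blast
  thus "ssm_stable c \<and> Rc c" using st by simp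
next
  assume a: "ssm_stable c \<and> Rc c"
  show "SSM_recurrent c" unfolding SSM_recurrent_def
  proof (intro conjI allI impI)
    show "ssm_stable c" using a by simp
    fix d assume r: "ssm_chain_step\<^sup>*\<^sup>* c d"
    have "ssm_stable d" using chain_star_stable[OF r] a by simp
    hence "ssm_chain_step\<^sup>*\<^sup>* d Mx" by (rule reach_M)
    moreover have "ssm_chain_step\<^sup>*\<^sup>* Mx c" using reach_from_M a by blast
    ultimately show "ssm_chain_step\<^sup>*\<^sup>* d c" by simp
  qed
qed

lemma count_sorted:
  fixes q :: "'n::finite \<Rightarrow> nat"
  defines "qs \<equiv> sorted_list_of_multiset (image_mset q (mset_set (UNIV::'n set)))"
  shows "length qs = CARD('n)" "sorted qs"
    "card {l. l < CARD('n) \<and> qs ! l \<le> t} = card {i. q i \<le> t}"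
proof -
  have m: "mset qs = image_mset q (mset_set UNIV)" unfolding qs_def by simp
  show len: "length qs = CARD('n)" using arg_cong[OF m, of size] by simp
  show "sorted qs" unfolding qs_def by simp
  have "length (filter (\<lambda>v. v \<le> t) qs) = size (mset (filter (\<lambda>v. v \<le> t) qs))"
    by (rule size_mset[symmetric])
  also have "\<dots> = size (filter_mset (\<lambda>v. v \<le> t) (image_mset q (mset_set UNIV)))"
    unfolding mset_filter m ..
  also have "\<dots> = card {i. q i \<le> t}"
    by (simp add: filter_mset_image_mset)
  finally show "card {l. l < CARD('n) \<and> qs ! l \<le> t} = card {i. q i \<le> t}"
    unfolding length_filter_conv_card len .
qed

lemma PF_count:
  "parking_function (q::'n::finite \<Rightarrow> nat) \<longleftrightarrow>
     (\<forall>i. 1 \<le> q i) \<and> (\<forall>j < CARD('n). j + 1 \<le> card {i. q i \<le> j + 1})"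
proof -
  define qs where "qs = sorted_list_of_multiset (image_mset q (mset_set (UNIV::'n set)))"
  note cs = count_sorted[of q, folded qs_def]
  have "(\<forall>i < CARD('n). qs ! i \<le> i + 1) \<longleftrightarrow> (\<forall>j < CARD('n). j + 1 \<le> card {i. q i \<le> j + 1})"
  proof
    assume a: "\<forall>i < CARD('n). qs ! i \<le> i + 1"
    show "\<forall>j < CARD('n). j + 1 \<le> card {i. q i \<le> j + 1}"
    proof (intro allI impI)
      fix j assume j: "j < CARD('n)"
      have "{..j} \<subseteq> {l. l < CARD('n) \<and> qs ! l \<le> j + 1}"
      proof
        fix l assume "l \<in> {..j}"
        hence "l \<le> j" by simp
        hence "qs ! l \<le> qs ! j" using sorted_nth_mono[OF cs(2)] j cs(1) by simp
        thus "l \<in> {l. l < CARD('n) \<and> qs ! l \<le> j + 1}" using a j \<open>l \<le> j\<close> by force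
      qed
      hence "card {..j} \<le> card {l. l < CARD('n) \<and> qs ! l \<le> j + 1}"
        by (intro card_mono) auto
      thus "j + 1 \<le> card {i. q i \<le> j + 1}" using cs(3) by simp
    qed
  next
    assume a: "\<forall>j < CARD('n). j + 1 \<le> card {i. q i \<le> j + 1}"
    show "\<forall>i < CARD('n). qs ! i \<le> i + 1"
    proof (intro allI impI)
      fix i assume i: "i < CARD('n)"
      show "qs ! i \<le> i + 1"
      proof (rule ccontr)
        assume b: "\<not> qs ! i \<le> i + 1"
        have "{l. l < CARD('n) \<and> qs ! l \<le> i + 1} \<subseteq> {..<i}"
        proof
          fix l assume l: "l \<in> {l. l < CARD('n) \<and> qs ! l \<le> i + 1}"
          show "l \<in> {..<i}"
          proof (rule ccontr)
            assume "l \<notin> {..<i}"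
            hence "i \<le> l" by simp
            hence "qs ! i \<le> qs ! l" using sorted_nth_mono[OF cs(2)] l cs(1) by simp
            thus False using b l by simp
          qed
        qed
        hence "card {l. l < CARD('n) \<and> qs ! l \<le> i + 1} \<le> i"
          using card_mono[of "{..<i}"] by fastforce
        thus False using a i cs(3) by fastforce
      qed
    qed
  qed
  thus ?thesis unfolding parking_function_def Let_def qs_def by simp
qed

lemma Rc_of_count:
  fixes c :: "'n::finite \<Rightarrow> nat"
  assumes cnt: "\<forall>m < CARD('n). CARD('n) - m \<le> card {i. m \<le> c i}"
  shows "Rc c"
proof -
  have "\<forall>A::'n set. card A = k \<longrightarrow> k * (k - 1) \<le> 2 * (\<Sum>i\<in>A. c i)" for k
  proof (induction k)
    case 0 then show ?case by simp
  next
    case (Suc k)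
    show ?case
    proof (intro allI impI)
      fix A :: "'n set" assume A: "card A = Suc k"
      have kn: "k < CARD('n)" using A card_mono[of UNIV A] by simp
      obtain a where a: "a \<in> A" "k \<le> c a"
      proof (rule ccontr)
        assume "\<not> thesis"
        hence "{i. k \<le> c i} \<subseteq> UNIV - A" using that by auto
        hence "card {i. k \<le> c i} \<le> card (UNIV - A)" by (intro card_mono) auto
        also have "\<dots> = CARD('n) - Suc k" using A by (simp add: card_Diff_subset)
        finally show False using cnt kn by fastforce
      qed
      have "card (A - {a}) = k" using A a by simp
      hence IH: "k * (k - 1) \<le> 2 * (\<Sum>i\<in>A - {a}. c i)" using Suc.IH by blast
      have s: "(\<Sum>i\<in>A. c i) = c a + (\<Sum>i\<in>A - {a}. c i)" using a by (simp add: sum.remove)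
      have kk: "Suc k * (Suc k - 1) = k * (k - 1) + 2 * k" by (cases k) auto
      show "Suc k * (Suc k - 1) \<le> 2 * (\<Sum>i\<in>A. c i)" using IH s kk a by linarith
    qed
  qed
  thus ?thesis unfolding Rc_def by blast
qed

lemma PF_le: "parking_function (q::'n::finite \<Rightarrow> nat) \<Longrightarrow> q i \<le> CARD('n)"
proof -
  assume pf: "parking_function q"
  have n1: "CARD('n) \<ge> 1" by (rule card_pos)
  hence "CARD('n) - 1 < CARD('n)" by simp
  hence "CARD('n) - 1 + 1 \<le> card {i. q i \<le> CARD('n) - 1 + 1}" using pf unfolding PF_count by blast
  hence "CARD('n) \<le> card {i. q i \<le> CARD('n)}" using n1 by simp
  hence "{i. q i \<le> CARD('n)} = UNIV" by (intro card_seteq) auto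
  thus ?thesis by auto
qed

lemma PF_Rc:
  fixes q :: "'n::finite \<Rightarrow> nat"
  assumes pf: "parking_function q"
  shows "Rc (\<lambda>i. CARD('n) - q i)"
proof (rule Rc_of_count, intro allI impI)
  fix m assume m: "m < CARD('n)"
  define j where "j = CARD('n) - m - 1"
  have j: "j < CARD('n)" "j + 1 = CARD('n) - m" using m unfolding j_def by auto
  have "\<And>i. m \<le> CARD('n) - q i \<longleftrightarrow> q i \<le> j + 1"
  proof -
    fix i have "q i \<le> CARD('n)" by (rule PF_le[OF pf])
    thus "m \<le> CARD('n) - q i \<longleftrightarrow> q i \<le> j + 1" using j(2) m by arith
  qed
  hence "{i. m \<le> CARD('n) - q i} = {i. q i \<le> j + 1}" by simp
  moreover have "j + 1 \<le> card {i. q i \<le> j + 1}" using pf j(1) unfolding PF_count by blast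
  ultimately show "CARD('n) - m \<le> card {i. m \<le> CARD('n) - q i}" using j(2) by simp
qed

lemma PF_of_distinct:
  fixes c :: "'n::finite \<Rightarrow> nat"
  assumes st: "ssm_stable c"
    and dist: "\<And>i j. i \<noteq> j \<Longrightarrow> c i < CARD('n) - 1 \<Longrightarrow> c i \<noteq> c j"
  shows "parking_function (\<lambda>i. CARD('n) - c i)"
  unfolding PF_count
proof (intro conjI allI impI)
  fix i
  have "c i \<le> CARD('n) - 1" using st unfolding ssm_stable_def by simp
  moreover have "CARD('n) \<ge> 1" by (rule card_pos)
  ultimately show "1 \<le> CARD('n) - c i" by arith
next
  fix j assume j: "j < CARD('n)"
  define B where "B = {i. c i < CARD('n) - j - 1}"
  have inj: "inj_on c B"
    unfolding B_def inj_on_def using dist by fastforce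
  have "c ` B \<subseteq> {..< CARD('n) - j - 1}" unfolding B_def by auto
  hence "card (c ` B) \<le> CARD('n) - j - 1" using card_mono[of "{..< CARD('n) - j - 1}"] by fastforce
  hence "card B \<le> CARD('n) - j - 1" using card_image[OF inj] by simp
  moreover have "{i. CARD('n) - c i \<le> j + 1} = UNIV - B"
  proof -
    have "\<And>i. CARD('n) - c i \<le> j + 1 \<longleftrightarrow> \<not> c i < CARD('n) - j - 1"
    proof -
      fix i
      have "c i \<le> CARD('n) - 1" using st unfolding ssm_stable_def by simp
      thus "CARD('n) - c i \<le> j + 1 \<longleftrightarrow> \<not> c i < CARD('n) - j - 1" using j by arith
    qed
    thus ?thesis unfolding B_def by auto
  qed
  moreover have "card (UNIV - B) = CARD('n) - card B" by (simp add: card_Diff_subset)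
  ultimately show "j + 1 \<le> card {i. CARD('n) - c i \<le> j + 1}" using j by simp
qed

definition phi_vec :: "('n::finite \<Rightarrow> nat) \<Rightarrow> real^'n" where
  "phi_vec c = (\<chi> i. real (CARD('n) - c i))"

definition Hs :: "(real^'n::finite) set" where
  "Hs = {x. (\<forall>i. 1 \<le> x$i) \<and>
     (\<forall>A. real (card A * (card A - 1)) \<le> 2 * (\<Sum>i\<in>A. real CARD('n) - x$i))}"

lemma convex_Hs: "convex (Hs :: (real^'n::finite) set)"
proof (rule convexI)
  fix x y :: "real^'n" and u v :: real
  assume x: "x \<in> Hs" and y: "y \<in> Hs" and u: "0 \<le> u" and v: "0 \<le> v" and uv: "u + v = 1"
  show "u *\<^sub>R x + v *\<^sub>R y \<in> Hs" unfolding Hs_def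
  proof (intro CollectI conjI allI)
    fix i
    have "u * 1 \<le> u * x$i" using x u unfolding Hs_def by (intro mult_left_mono) auto
    moreover have "v * 1 \<le> v * y$i" using y v unfolding Hs_def by (intro mult_left_mono) auto
    ultimately show "1 \<le> (u *\<^sub>R x + v *\<^sub>R y) $ i" using uv by simp
  next
    fix A :: "'n set"
    define K where "K = real (card A * (card A - 1))"
    define Sx where "Sx = (\<Sum>i\<in>A. real CARD('n) - x$i)"
    define Sy where "Sy = (\<Sum>i\<in>A. real CARD('n) - y$i)"
    have Kx: "K \<le> 2 * Sx" using x unfolding Hs_def K_def Sx_def by blast
    have Ky: "K \<le> 2 * Sy" using y unfolding Hs_def K_def Sy_def by blast
    have "(\<Sum>i\<in>A. real CARD('n) - (u *\<^sub>R x + v *\<^sub>R y)$i)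
        = (\<Sum>i\<in>A. u * (real CARD('n) - x$i) + v * (real CARD('n) - y$i))"
    proof (rule sum.cong)
      fix i
      have "real CARD('n) = (u + v) * real CARD('n)" using uv by simp
      thus "real CARD('n) - (u *\<^sub>R x + v *\<^sub>R y)$i = u * (real CARD('n) - x$i) + v * (real CARD('n) - y$i)"
        by (simp add: algebra_simps)
    qed simp
    also have "\<dots> = u * Sx + v * Sy" unfolding Sx_def Sy_def by (simp add: sum.distrib sum_distrib_left)
    finally have e: "(\<Sum>i\<in>A. real CARD('n) - (u *\<^sub>R x + v *\<^sub>R y)$i) = u * Sx + v * Sy" .
    have "u * K \<le> u * (2 * Sx)" using Kx u by (rule mult_left_mono)
    moreover have "v * K \<le> v * (2 * Sy)" using Ky v by (rule mult_left_mono)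
    moreover have "K = u * K + v * K" by (metis uv distrib_right mult_1)
    ultimately have "K \<le> 2 * (u * Sx + v * Sy)" by (simp add: algebra_simps)
    thus "real (card A * (card A - 1)) \<le> 2 * (\<Sum>i\<in>A. real CARD('n) - (u *\<^sub>R x + v *\<^sub>R y)$i)"
      unfolding e K_def .
  qed
qed

lemma PF_sub_Hs: "PF_points \<subseteq> (Hs :: (real^'n::finite) set)"
proof
  fix x :: "real^'n" assume "x \<in> PF_points"
  then obtain q where q: "parking_function q" and x: "x = (\<chi> i. real (q i))"
    unfolding PF_points_def by blast
  show "x \<in> Hs" unfolding Hs_def
  proof (intro CollectI conjI allI)
    fix i show "1 \<le> x $ i" using q unfolding x PF_count by simp
  next
    fix A :: "'n set"
    have R: "card A * (card A - 1) \<le> 2 * (\<Sum>i\<in>A. CARD('n) - q i)"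
      using PF_Rc[OF q] unfolding Rc_def by blast
    have "(\<Sum>i\<in>A. real CARD('n) - x $ i) = (\<Sum>i\<in>A. real (CARD('n) - q i))"
      by (rule sum.cong) (use PF_le[OF q] in \<open>auto simp: x of_nat_diff\<close>)
    also have "\<dots> = real (\<Sum>i\<in>A. CARD('n) - q i)" by simp
    finally show "real (card A * (card A - 1)) \<le> 2 * (\<Sum>i\<in>A. real CARD('n) - x $ i)"
      using R by (metis of_nat_le_iff of_nat_mult of_nat_numeral)
  qed
qed

lemma hull_sub_Hs: "convex hull PF_points \<subseteq> (Hs :: (real^'n::finite) set)"
  by (intro hull_minimal PF_sub_Hs convex_Hs)

lemma int_point:
  fixes x :: "real^'n::finite"
  assumes x: "x \<in> Hs" and xi: "\<forall>i. x$i \<in> \<int>"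
  shows "\<exists>c. ssm_stable c \<and> Rc c \<and> x = phi_vec c"
proof -
  define n where "n = CARD('n)"
  have n1: "n \<ge> 1" unfolding n_def by (rule card_pos)
  have le: "x$i \<le> real n" for i
  proof -
    have "real (card {i} * (card {i} - 1)) \<le> 2 * (\<Sum>k\<in>{i}. real CARD('n) - x$k)"
      using x unfolding Hs_def by blast
    thus ?thesis unfolding n_def by simp
  qed
  have ge: "1 \<le> x$i" for i using x unfolding Hs_def by blast
  define c where "c = (\<lambda>i. nat \<lfloor>real n - x$i\<rfloor>)"
  have rc: "real (c i) = real n - x$i" for i
  proof -
    have "real n - x$i \<in> \<int>" using xi by (simp add: Ints_diff)
    then obtain z where z: "real n - x$i = of_int z" by (erule Ints_cases)
    have "z \<ge> 0" using le[of i] z by simp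
    thus ?thesis unfolding c_def z by simp
  qed
  have cle: "c i \<le> n - 1" for i
  proof -
    have "real (c i) \<le> real n - 1" using rc[of i] ge[of i] by simp
    thus ?thesis using n1 by (simp add: of_nat_diff[symmetric])
  qed
  have st: "ssm_stable c" unfolding ssm_stable_def n_def[symmetric] using cle by simp
  have xeq: "x = phi_vec c"
    unfolding phi_vec_def vec_eq_iff
  proof
    fix i
    have "c i \<le> n" using cle[of i] by simp
    hence "real (n - c i) = real n - real (c i)" by (simp add: of_nat_diff)
    thus "x $ i = (\<chi> i. real (CARD('n) - c i)) $ i" using rc[of i] unfolding n_def by simp
  qed
  have R: "Rc c" unfolding Rc_def
  proof
    fix A :: "'n set"
    have "real (card A * (card A - 1)) \<le> 2 * (\<Sum>i\<in>A. real CARD('n) - x$i)"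
      using x unfolding Hs_def by blast
    also have "(\<Sum>i\<in>A. real CARD('n) - x$i) = real (\<Sum>i\<in>A. c i)"
      using rc unfolding n_def by simp
    finally show "card A * (card A - 1) \<le> 2 * (\<Sum>i\<in>A. c i)"
      by (metis of_nat_le_iff of_nat_mult of_nat_numeral)
  qed
  show ?thesis using st R xeq by blast
qed

lemma swap_Rc:
  fixes c :: "'n::finite \<Rightarrow> nat"
  assumes R: "Rc c" and ij: "i \<noteq> j" and eq: "c i = c j" and a1: "1 \<le> c i"
  shows "Rc (c(i := c i - 1, j := c j + 1))"
  unfolding Rc_def
proof
  fix A :: "'n set"
  define c' where "c' = c(i := c i - 1, j := c j + 1)"
  have pw: "c' k + (if k = i then 1 else 0) = c k + (if k = j then 1 else 0)" for k
    using ij a1 unfolding c'_def by auto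
  have "(\<Sum>k\<in>A. c' k + (if k = i then 1 else 0)) = (\<Sum>k\<in>A. c k + (if k = j then 1 else 0))"
    using pw by simp
  hence key: "(\<Sum>k\<in>A. c' k) + (if i \<in> A then 1 else 0) = (\<Sum>k\<in>A. c k) + (if j \<in> A then 1 else 0)"
    unfolding sum.distrib by simp
  have RA: "card A * (card A - 1) \<le> 2 * (\<Sum>k\<in>A. c k)" using R unfolding Rc_def by blast
  show "card A * (card A - 1) \<le> 2 * (\<Sum>k\<in>A. c' k)"
  proof (cases "i \<in> A \<and> j \<notin> A")
    case False
    hence "(\<Sum>k\<in>A. c k) \<le> (\<Sum>k\<in>A. c' k)" using key by (auto split: if_splits)
    thus ?thesis using RA by linarith
  next
    case True
    define k where "k = card A"
    define S where "S = (\<Sum>k\<in>A. c k)"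
    define a where "a = c i"
    have k1: "k \<ge> 1" using True unfolding k_def by (metis One_nat_def Suc_leI card_gt_0_iff empty_iff finite)
    have sS: "(\<Sum>k\<in>A. c' k) + 1 = S" using key True unfolding S_def by simp
    have R1: "(k - 1) * (k - 1 - 1) \<le> 2 * (S - a)"
    proof -
      have "card (A - {i}) * (card (A - {i}) - 1) \<le> 2 * (\<Sum>k\<in>A - {i}. c k)"
        using R unfolding Rc_def by blast
      moreover have "card (A - {i}) = k - 1" using True k_def by simp
      moreover have "(\<Sum>k\<in>A - {i}. c k) = S - a" using True unfolding S_def a_def
        by (simp add: sum_diff1_nat)
      ultimately show ?thesis by simp
    qed
    have R2: "(k + 1) * k \<le> 2 * (S + a)"
    proof -
      have "card (insert j A) * (card (insert j A) - 1) \<le> 2 * (\<Sum>k\<in>insert j A. c k)"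
        using R unfolding Rc_def by blast
      moreover have "card (insert j A) = k + 1" using True k_def by simp
      moreover have "(\<Sum>k\<in>insert j A. c k) = S + a" using True eq unfolding S_def a_def by simp
      ultimately show ?thesis by simp
    qed
    have aS: "a \<le> S" unfolding S_def a_def using True
      by (metis finite member_le_sum zero_le)
    obtain P Q T where P: "P = k * (k - 1)" and Q: "Q = (k - 1) * (k - 1 - 1)" and T: "T = (k + 1) * k"
      by simp
    have PQ: "P = Q + 2 * (k - 1)" unfolding P Q using k1 by (cases k; cases "k - 1") auto
    have PT: "T = P + 2 * k" unfolding P T using k1 by (cases k) auto
    have a1': "1 \<le> a" using a1 unfolding a_def .
    have "P \<le> 2 * (S - 1)" using R1 R2 PQ PT aS k1 a1' unfolding P[symmetric] Q[symmetric] T[symmetric]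
    proof -
      have e1: "(S - a) + a = S" using aS by simp
      have e2: "(S - 1) + 1 = S" using aS a1' by simp
      have e3: "(k - 1) + 1 = k" using k1 by simp
      obtain X Y Z where X: "X = S - a" and Y: "Y = S - 1" and Z: "Z = k - 1" by simp
      have F: "Q \<le> 2 * X" "T \<le> 2 * S + 2 * a" "P = Q + 2 * Z" "T = P + 2 * k" "X + a = S" "Y + 1 = S" "Z + 1 = k"
        using R1 R2 PQ PT e1 e2 e3 unfolding X Y Z P[symmetric] Q[symmetric] T[symmetric] by auto
      have "P \<le> 2 * Y" if "k \<le> a" using F that by linarith
      moreover have "P \<le> 2 * Y" if "\<not> k \<le> a"
      proof -
        have "a + 1 \<le> k" using that by simp
        thus ?thesis using F by linarith
      qed
      ultimately have "P \<le> 2 * Y" by blast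
      thus ?thesis unfolding Y .
    qed
    thus ?thesis unfolding P k_def sS[symmetric] by simp
  qed
qed

lemma sq_shift:
  fixes c :: "'n::finite \<Rightarrow> nat"
  assumes ij: "i \<noteq> j" and eq: "c i = a" "c j = a" and a1: "1 \<le> a"
  shows "(\<Sum>k\<in>UNIV. (c(i := a - 1, j := a + 1)) k ^ 2) = (\<Sum>k\<in>UNIV. c k ^ 2) + 2"
proof -
  define c' where "c' = c(i := a - 1, j := a + 1)"
  have pw: "c' k ^ 2 + (if k = i then 2 * a - 1 else 0) = c k ^ 2 + (if k = j then 2 * a + 1 else 0)" for k
  proof -
    obtain b where b: "a = Suc b" using a1 by (cases a) auto
    show ?thesis using ij eq unfolding c'_def b by (auto simp: power2_eq_square)
  qed
  have "(\<Sum>k\<in>UNIV. c' k ^ 2 + (if k = i then 2 * a - 1 else 0)) = (\<Sum>k\<in>UNIV. c k ^ 2 + (if k = j then 2 * a + 1 else 0))"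
    using pw by simp
  hence "(\<Sum>k\<in>UNIV. c' k ^ 2) + (2 * a - 1) = (\<Sum>k\<in>UNIV. c k ^ 2) + (2 * a + 1)"
    unfolding sum.distrib by simp
  thus ?thesis unfolding c'_def using a1 by simp
qed

lemma sq_bound:
  fixes c :: "'n::finite \<Rightarrow> nat"
  assumes "ssm_stable c"
  shows "(\<Sum>k\<in>UNIV. c k ^ 2) \<le> CARD('n) * CARD('n) ^ 2"
proof -
  have cl: "c k \<le> CARD('n)" for k using assms unfolding ssm_stable_def by (meson diff_le_self le_trans)
  have "\<And>k. c k ^ 2 \<le> CARD('n) ^ 2" using cl by (simp add: power_mono)
  hence "(\<Sum>k\<in>UNIV. c k ^ 2) \<le> of_nat (card (UNIV::'n set)) * CARD('n) ^ 2"
    using sum_bounded_above[of UNIV "\<lambda>k. c k ^ 2" "CARD('n) ^ 2"] by blast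
  thus ?thesis by simp
qed

lemma c_to_hull:
  fixes c :: "'n::finite \<Rightarrow> nat"
  shows "ssm_stable c \<Longrightarrow> Rc c \<Longrightarrow> phi_vec c \<in> convex hull PF_points"
proof (induction "CARD('n) * CARD('n) ^ 2 - (\<Sum>k\<in>UNIV. c k ^ 2)" arbitrary: c rule: less_induct)
  case less
  note st = less.prems(1) and R = less.prems(2)
  define n where "n = CARD('n)"
  show ?case
  proof (cases "\<exists>i j. i \<noteq> j \<and> c i = c j \<and> c i < n - 1")
    case True
    then obtain i j where ij: "i \<noteq> j" and eq: "c i = c j" and lt: "c i < n - 1" by blast
    define a where "a = c i"
    have a1: "1 \<le> a"
    proof -
      have "card {i, j} * (card {i, j} - 1) \<le> 2 * (\<Sum>k\<in>{i, j}. c k)" using R unfolding Rc_def by blast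
      thus ?thesis using ij eq unfolding a_def by simp
    qed
    define c1 where "c1 = c(i := a - 1, j := a + 1)"
    define c2 where "c2 = c(j := a - 1, i := a + 1)"
    have R1: "Rc c1" unfolding c1_def a_def using swap_Rc[OF R ij eq] a1 eq unfolding a_def by simp
    have R2: "Rc c2" unfolding c2_def a_def using swap_Rc[OF R ij[symmetric] eq[symmetric]] a1 eq unfolding a_def by simp
    have st1: "ssm_stable c1" using st lt unfolding c1_def ssm_stable_def a_def n_def by auto
    have st2: "ssm_stable c2" using st lt unfolding c2_def ssm_stable_def a_def n_def by auto
    have s1: "(\<Sum>k\<in>UNIV. c1 k ^ 2) = (\<Sum>k\<in>UNIV. c k ^ 2) + 2"
      unfolding c1_def by (rule sq_shift[OF ij]) (use eq a1 a_def in auto)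
    have s2: "(\<Sum>k\<in>UNIV. c2 k ^ 2) = (\<Sum>k\<in>UNIV. c k ^ 2) + 2"
      unfolding c2_def by (rule sq_shift[OF ij[symmetric]]) (use eq a1 a_def in auto)
    have h1: "phi_vec c1 \<in> convex hull PF_points"
      using less.hyps[OF _ st1 R1] s1 sq_bound[OF st1] by linarith
    have h2: "phi_vec c2 \<in> convex hull PF_points"
      using less.hyps[OF _ st2 R2] s2 sq_bound[OF st2] by linarith
    have mid: "phi_vec c = (1/2) *\<^sub>R phi_vec c1 + (1/2) *\<^sub>R phi_vec c2"
      unfolding vec_eq_iff phi_vec_def
    proof
      fix k
      have cle: "c k \<le> n - 1" using st unfolding ssm_stable_def n_def by simp
      have "real (n - c1 k) + real (n - c2 k) = 2 * real (n - c k)"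
      proof (cases "k = i \<or> k = j")
        case True
        have "a + 1 \<le> n" using lt a_def by simp
        thus ?thesis using True ij eq a1 unfolding c1_def c2_def a_def
          by (auto simp: of_nat_diff)
      next
        case False thus ?thesis unfolding c1_def c2_def by auto
      qed
      thus "(\<chi> i. real (CARD('n) - c i)) $ k =
          ((1/2) *\<^sub>R (\<chi> i. real (CARD('n) - c1 i)) + (1/2) *\<^sub>R (\<chi> i. real (CARD('n) - c2 i))) $ k"
        unfolding n_def by simp
    qed
    show ?thesis unfolding mid by (rule convexD[OF convex_convex_hull h1 h2]) auto
  next
    case False
    hence "\<And>i j. i \<noteq> j \<Longrightarrow> c i < CARD('n) - 1 \<Longrightarrow> c i \<noteq> c j" unfolding n_def by blast
    hence "parking_function (\<lambda>i. CARD('n) - c i)" by (rule PF_of_distinct[OF st])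
    hence "phi_vec c \<in> PF_points" unfolding PF_points_def phi_vec_def
      by (intro CollectI exI[of _ "\<lambda>i. CARD('n) - c i"]) simp
    thus ?thesis by (rule hull_inc)
  qed
qed

theorem corollary4p2:
  shows "card {c :: 'n::finite \<Rightarrow> nat. SSM_recurrent c}
       = card {x :: real ^ 'n. x \<in> convex hull PF_points \<and> (\<forall>i. x $ i \<in> \<int>)}"
proof -
  have S1: "{c :: 'n \<Rightarrow> nat. SSM_recurrent c} = {c. ssm_stable c \<and> Rc c}"
    by (simp add: SR_iff)
  have inj: "inj_on phi_vec {c :: 'n \<Rightarrow> nat. ssm_stable c \<and> Rc c}"
  proof (rule inj_onI)
    fix c d :: "'n \<Rightarrow> nat"
    assume c: "c \<in> {c. ssm_stable c \<and> Rc c}" and d: "d \<in> {c. ssm_stable c \<and> Rc c}"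
      and e: "phi_vec c = phi_vec d"
    show "c = d"
    proof (rule ext)
      fix i
      have "real (CARD('n) - c i) = real (CARD('n) - d i)"
        using e unfolding phi_vec_def vec_eq_iff by auto
      hence "CARD('n) - c i = CARD('n) - d i" by simp
      moreover have "c i \<le> CARD('n) - 1" "d i \<le> CARD('n) - 1"
        using c d unfolding ssm_stable_def by auto
      ultimately show "c i = d i" by linarith
    qed
  qed
  have img: "phi_vec ` {c :: 'n \<Rightarrow> nat. ssm_stable c \<and> Rc c}
      = {x :: real ^ 'n. x \<in> convex hull PF_points \<and> (\<forall>i. x $ i \<in> \<int>)}"
  proof (intro equalityI subsetI)
    fix x assume "x \<in> phi_vec ` {c :: 'n \<Rightarrow> nat. ssm_stable c \<and> Rc c}"
    then obtain c where c: "ssm_stable c" "Rc c" and x: "x = phi_vec c" by blast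
    have "phi_vec c \<in> convex hull PF_points" by (rule c_to_hull[OF c])
    moreover have "\<forall>i. phi_vec c $ i \<in> \<int>" unfolding phi_vec_def by simp
    ultimately show "x \<in> {x. x \<in> convex hull PF_points \<and> (\<forall>i. x $ i \<in> \<int>)}" using x by simp
  next
    fix x assume "x \<in> {x :: real ^ 'n. x \<in> convex hull PF_points \<and> (\<forall>i. x $ i \<in> \<int>)}"
    hence "x \<in> Hs" "\<forall>i. x $ i \<in> \<int>" using hull_sub_Hs by auto
    then obtain c where "ssm_stable c" "Rc c" "x = phi_vec c" using int_point by blast
    thus "x \<in> phi_vec ` {c. ssm_stable c \<and> Rc c}" by blast
  qed
  show ?thesis unfolding S1 img[symmetric] by (rule card_image[OF inj, symmetric])
qed


end
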